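(* Let $(X,Y)\sim\mathcal D$ with $Y\in[0,1]^d$, $f:\mathcal X\to[0,1]^d$ a forecaster, $\mathcal A$ a finite action set and $u(a,p)=r_a\cdot p+c_a$ with $r_a\in\mathbb R^d$, $c_a\in\mathbb R$; let $\mathrm{val}(p)=\max_{a\in\mathcal A}u(a,p)$ and $L:=\max_{a}\|r_a\|_2$. Let $\{B_j\}_{j=1}^J$ be a measurable partition of $[0,1]^d$, write $E_j=\{f(X)\in B_j\}$, $P_j=\mathbb P(E_j)>0$, $m_j=\mathbb E[f(X)\mid E_j]$. For $\varepsilon\ge0$ let $$\mathcal Q_\varepsilon=\Big\{q:[0,1]^d\to[0,1]^d:\ \big\|\mathbb E[\mathbf 1_{\{f(X)\in B_j\}}\{q(f(X))-f(X)\}]\big\|_2\le\varepsilon,\ j=1,\ldots,J\Big\}.$$ Then $$\sum_{j=1}^J P_j\,\mathrm{val}(m_j)-JL\varepsilon\ \le\ \min_{q\in\mathcal Q_\varepsilon}\mathbb E\big[\mathrm{val}(q(f(X)))\big]\ \le\ \sum_{j=1}^J P_j\,\mathrm{val}(m_j).$$ Moreover, there exists a worst-case (or arbitrarily near-worst-case) belief that is piecewise constant: for each $j$ one can take $q^\star_\varepsilon(v)=p_j^\star$ for $v\in B_j$ (a.e.), with $$p_j^\star\in\arg\min\{\mathrm{val}(p): p\in[0,1]^d,\ \|p-m_j\|_2\le\varepsilon/P_j\},$$ and the robust action on $B_j$ best-responds to $p_j^\star$, i.e. lies in $\arg\max_{a\in\mathcal A}u(a,p_j^\star)$.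
   Context: "a.e." refers to the distribution of $f(X)$. Bins with $P_j=0$ are ignorable and are excluded. *)

theory Defs
  imports "HOL-Probability.Probability"
begin

text \<open>The unit cube [0,1]^d, with d encoded as a finite index type.\<close>
definition unit_cube :: "(real ^ 'd) set" where
  "unit_cube = {p. \<forall>i. 0 \<le> p $ i \<and> p $ i \<le> 1}"

definition util :: "('b \<Rightarrow> real ^ 'd) \<Rightarrow> ('b \<Rightarrow> real) \<Rightarrow> 'b \<Rightarrow> real ^ 'd \<Rightarrow> real" where
  "util r c a p = r a \<bullet> p + c a"

definition val :: "'b set \<Rightarrow> ('b \<Rightarrow> real ^ 'd) \<Rightarrow> ('b \<Rightarrow> real) \<Rightarrow> real ^ 'd \<Rightarrow> real" where
  "val A r c p = Max ((\<lambda>a. util r c a p) ` A)"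

definition lip_const :: "'b set \<Rightarrow> ('b \<Rightarrow> real ^ 'd) \<Rightarrow> real" where
  "lip_const A r = Max ((\<lambda>a. norm (r a)) ` A)"

definition best_resp :: "'b set \<Rightarrow> ('b \<Rightarrow> real ^ 'd) \<Rightarrow> ('b \<Rightarrow> real) \<Rightarrow> real ^ 'd \<Rightarrow> 'b set" where
  "best_resp A r c p = {a \<in> A. \<forall>b \<in> A. util r c b p \<le> util r c a p}"

definition bin_prob :: "'a measure \<Rightarrow> ('a \<Rightarrow> 'x) \<Rightarrow> ('x \<Rightarrow> real ^ 'd) \<Rightarrow> (real ^ 'd) set \<Rightarrow> real" where
  "bin_prob M X f Bj = measure M {\<omega> \<in> space M. f (X \<omega>) \<in> Bj}"

text \<open>m_j = E[f(X) | E_j] = E[1_{E_j} f(X)] / P_j.\<close>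
definition bin_mean :: "'a measure \<Rightarrow> ('a \<Rightarrow> 'x) \<Rightarrow> ('x \<Rightarrow> real ^ 'd) \<Rightarrow> (real ^ 'd) set \<Rightarrow> real ^ 'd" where
  "bin_mean M X f Bj = (1 / bin_prob M X f Bj) *\<^sub>R
      (\<integral>\<omega>. indicator {\<omega> \<in> space M. f (X \<omega>) \<in> Bj} \<omega> *\<^sub>R f (X \<omega>) \<partial>M)"

definition Q_set :: "'a measure \<Rightarrow> ('a \<Rightarrow> 'x) \<Rightarrow> ('x \<Rightarrow> real ^ 'd) \<Rightarrow> (nat \<Rightarrow> (real ^ 'd) set)
    \<Rightarrow> nat \<Rightarrow> real \<Rightarrow> (real ^ 'd \<Rightarrow> real ^ 'd) set" where
  "Q_set M X f B J \<epsilon> = {q. q \<in> borel_measurable borel \<and> (\<forall>v \<in> unit_cube. q v \<in> unit_cube) \<and>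
      (\<forall>j \<in> {1..J}. norm (\<integral>\<omega>. indicator {\<omega> \<in> space M. f (X \<omega>) \<in> B j} \<omega> *\<^sub>R
                                 (q (f (X \<omega>)) - f (X \<omega>)) \<partial>M) \<le> \<epsilon>)}"

definition exp_val :: "'a measure \<Rightarrow> ('a \<Rightarrow> 'x) \<Rightarrow> ('x \<Rightarrow> real ^ 'd) \<Rightarrow> 'b set \<Rightarrow> ('b \<Rightarrow> real ^ 'd)
    \<Rightarrow> ('b \<Rightarrow> real) \<Rightarrow> (real ^ 'd \<Rightarrow> real ^ 'd) \<Rightarrow> real" where
  "exp_val M X f A r c q = (\<integral>\<omega>. val A r c (q (f (X \<omega>))) \<partial>M)"

definition worst_beliefs :: "'b set \<Rightarrow> ('b \<Rightarrow> real ^ 'd) \<Rightarrow> ('b \<Rightarrow> real) \<Rightarrow> real ^ 'd \<Rightarrow> real \<Rightarrow> (real ^ 'd) set" where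
  "worst_beliefs A r c m \<rho> = {p \<in> unit_cube. norm (p - m) \<le> \<rho> \<and>
      (\<forall>p' \<in> unit_cube. norm (p' - m) \<le> \<rho> \<longrightarrow> val A r c p \<le> val A r c p')}"

end

theory Submission
  imports Defs
begin


lemma val_ge: "finite A \<Longrightarrow> a \<in> A \<Longrightarrow> util r c a p \<le> val A r c p"
  unfolding val_def by (rule Max_ge) auto

lemma val_attain: "finite A \<Longrightarrow> A \<noteq> {} \<Longrightarrow> \<exists>a\<in>A. val A r c p = util r c a p"
proof -
  assume "finite A" "A \<noteq> {}"
  then have "val A r c p \<in> (\<lambda>a. util r c a p) ` A" unfolding val_def by (intro Max_in) auto
  then show ?thesis by auto
qed

lemma lip_ge: "finite A \<Longrightarrow> a \<in> A \<Longrightarrow> norm (r a) \<le> lip_const A r"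
  unfolding lip_const_def by (rule Max_ge) auto

lemma lip_nonneg: "finite A \<Longrightarrow> A \<noteq> {} \<Longrightarrow> 0 \<le> lip_const A r"
  using lip_ge[of A _ r] norm_ge_zero by (meson all_not_in_conv order_trans)

lemma val_lip:
  assumes "finite A" "A \<noteq> {}"
  shows "val A r c m - lip_const A r * norm (p - m) \<le> val A r c p"
proof -
  obtain a where a: "a \<in> A" "val A r c m = util r c a m" using val_attain[OF assms] by blast
  have "util r c a p = util r c a m + r a \<bullet> (p - m)" by (simp add: util_def inner_diff_right)
  moreover have "- (norm (r a) * norm (p - m)) \<le> r a \<bullet> (p - m)"
    using Cauchy_Schwarz_ineq2[of "r a" "p - m"] by linarith
  moreover have "norm (r a) * norm (p - m) \<le> lip_const A r * norm (p - m)"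
    using lip_ge[OF assms(1) a(1), of r] by (simp add: mult_right_mono)
  moreover have "util r c a p \<le> val A r c p" using val_ge[OF assms(1) a(1)] .
  ultimately show ?thesis using a(2) by linarith
qed

lemma val_cont:
  assumes "finite A" "A \<noteq> {}"
  shows "continuous_on S (val A r c)"
proof -
  have "(lip_const A r)-lipschitz_on S (val A r c)"
  proof (rule lipschitz_onI)
    fix x y
    have "val A r c y - lip_const A r * norm (x - y) \<le> val A r c x" using val_lip[OF assms] .
    moreover have "val A r c x - lip_const A r * norm (y - x) \<le> val A r c y" using val_lip[OF assms] .
    ultimately show "dist (val A r c x) (val A r c y) \<le> lip_const A r * dist x y"
      by (simp add: dist_norm norm_minus_commute abs_le_iff)
  qed (rule lip_nonneg[OF assms])
  then show ?thesis by (rule lipschitz_on_continuous_on)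
qed

lemma unit_cube_cbox: "unit_cube = cbox (0::real^'d) 1"
  unfolding unit_cube_def by (auto simp: mem_box_cart)

lemma compact_unit_cube: "compact (unit_cube :: (real^'d) set)"
  by (simp add: unit_cube_cbox)

lemma unit_cube_bound: "\<exists>K. \<forall>x\<in>(unit_cube :: (real^'d) set). norm x \<le> K"
  using compact_imp_bounded[OF compact_unit_cube] bounded_iff by blast

lemma val_bound:
  assumes "finite A" "A \<noteq> {}"
  shows "\<exists>K. \<forall>x\<in>(unit_cube :: (real^'d) set). norm (val A r c x) \<le> K"
proof -
  have "compact (val A r c ` unit_cube)"
    by (rule compact_continuous_image[OF val_cont[OF assms] compact_unit_cube])
  then have "bounded (val A r c ` unit_cube)" by (rule compact_imp_bounded)
  then obtain K where K: "\<forall>y\<in>val A r c ` unit_cube. norm y \<le> K" unfolding bounded_iff by blast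
  then show ?thesis by auto
qed

lemma integrable_cube:
  assumes "prob_space M" "h \<in> borel_measurable M" "\<forall>\<omega>\<in>space M. h \<omega> \<in> (unit_cube :: (real^'d) set)"
  shows "integrable M h"
proof -
  interpret prob_space M by fact
  obtain K where K: "\<forall>x\<in>(unit_cube :: (real^'d) set). norm x \<le> K" using unit_cube_bound by blast
  show ?thesis
    by (rule integrable_const_bound[where B=K]) (use assms K in auto)
qed

lemma integrable_val:
  assumes "prob_space M" "h \<in> borel_measurable M" "\<forall>\<omega>\<in>space M. h \<omega> \<in> (unit_cube :: (real^'d) set)"
    "finite A" "A \<noteq> {}"
  shows "integrable M (\<lambda>\<omega>. val A r c (h \<omega>))"
proof -
  interpret prob_space M by fact
  obtain K where K: "\<forall>x\<in>(unit_cube :: (real^'d) set). norm (val A r c x) \<le> K"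
    using val_bound[OF assms(4,5)] by blast
  have m: "val A r c \<in> borel_measurable borel"
    by (rule borel_measurable_continuous_onI[OF val_cont[OF assms(4,5)]])
  show ?thesis
    by (rule integrable_const_bound[where B=K]) (use assms K m in auto)
qed

lemma cube_mean:
  assumes "prob_space M" "h \<in> borel_measurable M" "\<forall>\<omega>\<in>space M. h \<omega> \<in> (unit_cube :: (real^'d) set)"
    "E \<in> sets M" "measure M E > 0"
  shows "(1 / measure M E) *\<^sub>R (\<integral>\<omega>. indicator E \<omega> *\<^sub>R h \<omega> \<partial>M) \<in> unit_cube"
proof -
  interpret prob_space M by fact
  have ih: "integrable M (\<lambda>\<omega>. indicator E \<omega> *\<^sub>R h \<omega>)"
    by (rule integrable_mult_indicator[OF assms(4) integrable_cube[OF assms(1-3)]])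
  have "0 \<le> (\<integral>\<omega>. indicator E \<omega> *\<^sub>R h \<omega> \<partial>M) $ i \<and> (\<integral>\<omega>. indicator E \<omega> *\<^sub>R h \<omega> \<partial>M) $ i \<le> measure M E" for i
  proof -
    have eq: "(\<integral>\<omega>. indicator E \<omega> *\<^sub>R h \<omega> \<partial>M) $ i = (\<integral>\<omega>. indicator E \<omega> * h \<omega> $ i \<partial>M)"
      using integral_inner_left[OF ih, of "axis i 1"] by (simp add: inner_axis)
    have ii: "integrable M (\<lambda>\<omega>. indicator E \<omega> * h \<omega> $ i)"
      using integrable_inner_left[OF ih, of "axis i 1"] by (simp add: inner_axis)
    have "0 \<le> (\<integral>\<omega>. indicator E \<omega> * h \<omega> $ i \<partial>M)"
      using assms(3) by (intro integral_nonneg_AE AE_I2) (auto simp: unit_cube_def indicator_def)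
    moreover have "(\<integral>\<omega>. indicator E \<omega> * h \<omega> $ i \<partial>M) \<le> (\<integral>\<omega>. indicator E \<omega> \<partial>M)"
      using assms(3,4) by (intro integral_mono ii integrable_real_indicator) (auto simp: unit_cube_def indicator_def less_top[symmetric] emeasure_finite)
    ultimately show ?thesis using eq assms(4) by (simp add: Int_absorb2 sets.sets_into_space)
  qed
  then show ?thesis using assms(5)
    by (auto simp: unit_cube_def divide_simps)
qed

lemma Ej_sets:
  assumes "g \<in> borel_measurable M" "B \<in> sets borel"
  shows "{\<omega>\<in>space M. g \<omega> \<in> B} \<in> sets M"
proof -
  have "{\<omega>\<in>space M. g \<omega> \<in> B} = g -` B \<inter> space M" by auto
  then show ?thesis using measurable_sets[OF assms] by simp
qed

lemma bin_jensen:
  assumes "prob_space M" "h \<in> borel_measurable M" "\<forall>\<omega>\<in>space M. h \<omega> \<in> (unit_cube :: (real^'d) set)"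
    "E \<in> sets M" "measure M E > 0" "finite A" "A \<noteq> {}"
  shows "measure M E * val A r c ((1 / measure M E) *\<^sub>R (\<integral>\<omega>. indicator E \<omega> *\<^sub>R h \<omega> \<partial>M))
         \<le> (\<integral>\<omega>. indicator E \<omega> * val A r c (h \<omega>) \<partial>M)"
proof -
  interpret prob_space M by fact
  define S where "S = (\<integral>\<omega>. indicator E \<omega> *\<^sub>R h \<omega> \<partial>M)"
  define P where "P = measure M E"
  have P: "P > 0" using assms(5) P_def by simp
  have ih: "integrable M (\<lambda>\<omega>. indicator E \<omega> *\<^sub>R h \<omega>)"
    by (rule integrable_mult_indicator[OF assms(4) integrable_cube[OF assms(1-3)]])
  have iv: "integrable M (\<lambda>\<omega>. indicator E \<omega> * val A r c (h \<omega>))"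
    using integrable_mult_indicator[OF assms(4) integrable_val[OF assms(1-3,6,7)], of r c] by simp
  obtain a where a: "a \<in> A" "val A r c ((1 / P) *\<^sub>R S) = util r c a ((1 / P) *\<^sub>R S)"
    using val_attain[OF assms(6,7)] by blast
  have i2: "integrable M (\<lambda>\<omega>. r a \<bullet> (indicator E \<omega> *\<^sub>R h \<omega>))"
    using ih by (rule integrable_inner_right)
  have i3: "integrable M (\<lambda>\<omega>. c a * indicator E \<omega>)"
    using assms(4) by (intro integrable_mult_right integrable_real_indicator) (auto simp: less_top[symmetric] emeasure_finite)
  have "P * val A r c ((1 / P) *\<^sub>R S) = r a \<bullet> S + c a * P"
    using a(2) P by (simp add: util_def inner_scaleR_right field_simps)
  also have "\<dots> = (\<integral>\<omega>. r a \<bullet> (indicator E \<omega> *\<^sub>R h \<omega>) + c a * indicator E \<omega> \<partial>M)"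
  proof -
    have "(\<integral>\<omega>. r a \<bullet> (indicator E \<omega> *\<^sub>R h \<omega>) + c a * indicator E \<omega> \<partial>M)
        = (\<integral>\<omega>. r a \<bullet> (indicator E \<omega> *\<^sub>R h \<omega>) \<partial>M) + (\<integral>\<omega>. c a * indicator E \<omega> \<partial>M)"
      by (rule Bochner_Integration.integral_add[OF i2 i3])
    also have "(\<integral>\<omega>. r a \<bullet> (indicator E \<omega> *\<^sub>R h \<omega>) \<partial>M) = r a \<bullet> S"
      unfolding S_def by (rule integral_inner_right) (rule ih)
    also have "(\<integral>\<omega>. c a * indicator E \<omega> \<partial>M) = c a * P"
      using assms(4) by (simp add: P_def Int_absorb2 sets.sets_into_space)
    finally show ?thesis by simp
  qed
  also have "\<dots> \<le> (\<integral>\<omega>. indicator E \<omega> * val A r c (h \<omega>) \<partial>M)"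
  proof (rule integral_mono)
    show "integrable M (\<lambda>\<omega>. r a \<bullet> (indicator E \<omega> *\<^sub>R h \<omega>) + c a * indicator E \<omega>)"
      by (rule Bochner_Integration.integrable_add[OF i2 i3])
    show "integrable M (\<lambda>\<omega>. indicator E \<omega> * val A r c (h \<omega>))" by (rule iv)
    fix \<omega>
    have "util r c a (h \<omega>) \<le> val A r c (h \<omega>)" by (rule val_ge[OF assms(6) a(1)])
    then show "r a \<bullet> (indicator E \<omega> *\<^sub>R h \<omega>) + c a * indicator E \<omega> \<le> indicator E \<omega> * val A r c (h \<omega>)"
      by (auto simp: indicator_def util_def)
  qed
  finally show ?thesis by (simp add: S_def P_def)
qed

lemma partition_sum:
  fixes g :: "'a \<Rightarrow> real^'d" and F :: "'a \<Rightarrow> real" and J :: nat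
  assumes "prob_space M" "g \<in> borel_measurable M" "\<forall>\<omega>\<in>space M. g \<omega> \<in> unit_cube"
    "\<forall>j\<in>{1..J}. B j \<in> sets borel" "disjoint_family_on B {1..J}" "(\<Union>j\<in>{1..J}. B j) = unit_cube"
    "integrable M F"
  shows "(\<integral>\<omega>. F \<omega> \<partial>M) = (\<Sum>j=1..J. \<integral>\<omega>. indicator {\<omega>\<in>space M. g \<omega> \<in> B j} \<omega> * F \<omega> \<partial>M)"
proof -
  have pw: "(\<Sum>j=1..J. indicator {\<omega>\<in>space M. g \<omega> \<in> B j} \<omega> * F \<omega>) = F \<omega>" if w: "\<omega> \<in> space M" for \<omega>
  proof -
    have "g \<omega> \<in> (\<Union>j\<in>{1..J}. B j)" using assms(3,6) w by simp
    then obtain j0 where j0: "j0 \<in> {1..J}" "g \<omega> \<in> B j0" by (rule UN_E)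
    have "(\<Sum>j=1..J. indicator {\<omega>\<in>space M. g \<omega> \<in> B j} \<omega> * F \<omega>)
       = indicator {\<omega>\<in>space M. g \<omega> \<in> B j0} \<omega> * F \<omega> + (\<Sum>j\<in>{1..J}-{j0}. indicator {\<omega>\<in>space M. g \<omega> \<in> B j} \<omega> * F \<omega>)"
      by (rule sum.remove) (use j0 in auto)
    also have "(\<Sum>j\<in>{1..J}-{j0}. indicator {\<omega>\<in>space M. g \<omega> \<in> B j} \<omega> * F \<omega>) = 0"
    proof (rule sum.neutral, rule ballI)
      fix j assume "j \<in> {1..J}-{j0}"
      then have "j \<in> {1..J}" "j \<noteq> j0" by auto
      then have "B j \<inter> B j0 = {}" using disjoint_family_onD[OF assms(5)] j0(1) by blast
      then have "g \<omega> \<notin> B j" using j0(2) by blast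
      then show "indicator {\<omega>\<in>space M. g \<omega> \<in> B j} \<omega> * F \<omega> = 0" by simp
    qed
    finally show ?thesis using w j0 by simp
  qed
  have "(\<integral>\<omega>. F \<omega> \<partial>M) = (\<integral>\<omega>. (\<Sum>j=1..J. indicator {\<omega>\<in>space M. g \<omega> \<in> B j} \<omega> * F \<omega>) \<partial>M)"
    by (rule Bochner_Integration.integral_cong[OF refl]) (simp only: pw)
  also have "\<dots> = (\<Sum>j=1..J. \<integral>\<omega>. indicator {\<omega>\<in>space M. g \<omega> \<in> B j} \<omega> * F \<omega> \<partial>M)"
  proof (rule Bochner_Integration.integral_sum)
    fix j assume "j \<in> {1..J}"
    then have "B j \<in> sets borel" using assms(4) by blast
    then have E: "{\<omega>\<in>space M. g \<omega> \<in> B j} \<in> sets M"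
      by (rule Ej_sets[OF assms(2)])
    show "integrable M (\<lambda>\<omega>. indicator {\<omega>\<in>space M. g \<omega> \<in> B j} \<omega> * F \<omega>)"
      using integrable_mult_indicator[OF E assms(7)] by (simp only: real_scaleR_def)
  qed
  finally show ?thesis .
qed



lemma wb_nonempty:
  assumes "finite A" "A \<noteq> {}" "m \<in> unit_cube" "\<rho> \<ge> 0"
  shows "worst_beliefs A r c m \<rho> \<noteq> {}"
proof -
  define K where "K = unit_cube \<inter> cball m \<rho>"
  have "compact K" unfolding K_def by (intro compact_Int_closed compact_unit_cube closed_cball)
  moreover have "K \<noteq> {}" using assms(3,4) K_def by auto
  ultimately obtain x where x: "x \<in> K" "\<forall>y\<in>K. val A r c x \<le> val A r c y"
    using continuous_attains_inf[OF _ _ val_cont[OF assms(1,2)]] by blast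
  have "x \<in> worst_beliefs A r c m \<rho>"
    using x unfolding worst_beliefs_def K_def by (auto simp: dist_norm norm_minus_commute)
  then show ?thesis by blast
qed

lemma sum_ind_eq:
  fixes p :: "nat \<Rightarrow> real^'d"
  assumes "disjoint_family_on B I" "finite I" "j \<in> I" "v \<in> B j"
  shows "(\<Sum>i\<in>I. indicator (B i) v *\<^sub>R p i) = p j"
proof -
  have "(\<Sum>i\<in>I. indicator (B i) v *\<^sub>R p i) = indicator (B j) v *\<^sub>R p j + (\<Sum>i\<in>I-{j}. indicator (B i) v *\<^sub>R p i)"
    by (rule sum.remove) (use assms in auto)
  also have "(\<Sum>i\<in>I-{j}. indicator (B i) v *\<^sub>R p i) = 0"
  proof (rule sum.neutral, rule ballI)
    fix i assume i: "i \<in> I-{j}"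
    then have "B i \<inter> B j = {}" using disjoint_family_onD[OF assms(1)] assms(3) by blast
    then have "v \<notin> B i" using assms(4) by blast
    then show "indicator (B i) v *\<^sub>R p i = 0" by simp
  qed
  finally show ?thesis using assms(4) by simp
qed

lemma shift_eq:
  fixes g h :: "'a \<Rightarrow> real^'d"
  assumes "prob_space M" "E \<in> sets M"
    "h \<in> borel_measurable M" "\<forall>\<omega>\<in>space M. h \<omega> \<in> unit_cube"
    "g \<in> borel_measurable M" "\<forall>\<omega>\<in>space M. g \<omega> \<in> unit_cube"
  shows "(\<integral>\<omega>. indicator E \<omega> *\<^sub>R (h \<omega> - g \<omega>) \<partial>M)
       = (\<integral>\<omega>. indicator E \<omega> *\<^sub>R h \<omega> \<partial>M) - (\<integral>\<omega>. indicator E \<omega> *\<^sub>R g \<omega> \<partial>M)"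
proof -
  have ih: "integrable M (\<lambda>\<omega>. indicator E \<omega> *\<^sub>R h \<omega>)"
    by (rule integrable_mult_indicator[OF assms(2) integrable_cube[OF assms(1,3,4)]])
  have ig: "integrable M (\<lambda>\<omega>. indicator E \<omega> *\<^sub>R g \<omega>)"
    by (rule integrable_mult_indicator[OF assms(2) integrable_cube[OF assms(1,5,6)]])
  have "(\<lambda>\<omega>. indicator E \<omega> *\<^sub>R (h \<omega> - g \<omega>)) = (\<lambda>\<omega>. indicator E \<omega> *\<^sub>R h \<omega> - indicator E \<omega> *\<^sub>R g \<omega>)"
    by (rule ext) (rule scaleR_diff_right)
  then show ?thesis using Bochner_Integration.integral_diff[OF ih ig] by simp
qed

lemma bin_lower:
  fixes g h :: "'a \<Rightarrow> real^'d"
  assumes "prob_space M" "E \<in> sets M" "measure M E > 0"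
    "h \<in> borel_measurable M" "\<forall>\<omega>\<in>space M. h \<omega> \<in> unit_cube"
    "g \<in> borel_measurable M" "\<forall>\<omega>\<in>space M. g \<omega> \<in> unit_cube"
    "finite A" "A \<noteq> {}"
    "norm (\<integral>\<omega>. indicator E \<omega> *\<^sub>R (h \<omega> - g \<omega>) \<partial>M) \<le> \<epsilon>"
    "p \<in> worst_beliefs A r c ((1 / measure M E) *\<^sub>R (\<integral>\<omega>. indicator E \<omega> *\<^sub>R g \<omega> \<partial>M)) (\<epsilon> / measure M E)"
  shows "measure M E * val A r c p \<le> (\<integral>\<omega>. indicator E \<omega> * val A r c (h \<omega>) \<partial>M)"
proof -
  define P where "P = measure M E"
  define Sh where "Sh = (\<integral>\<omega>. indicator E \<omega> *\<^sub>R h \<omega> \<partial>M)"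
  define Sg where "Sg = (\<integral>\<omega>. indicator E \<omega> *\<^sub>R g \<omega> \<partial>M)"
  have P: "P > 0" using assms(3) P_def by simp
  have mc: "(1 / P) *\<^sub>R Sh \<in> unit_cube"
    using cube_mean[OF assms(1,4,5,2,3)] by (simp add: P_def Sh_def)
  have "norm (Sh - Sg) \<le> \<epsilon>" using assms(10) shift_eq[OF assms(1,2,4,5,6,7)] by (simp add: Sh_def Sg_def)
  then have "norm ((1 / P) *\<^sub>R Sh - (1 / P) *\<^sub>R Sg) \<le> \<epsilon> / P"
    using P by (simp add: scaleR_diff_right[symmetric] divide_simps mult.commute)
  then have "val A r c p \<le> val A r c ((1 / P) *\<^sub>R Sh)"
    using assms(11) mc unfolding worst_beliefs_def P_def Sg_def by blast
  then have "P * val A r c p \<le> P * val A r c ((1 / P) *\<^sub>R Sh)"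
    using P by simp
  also have "\<dots> \<le> (\<integral>\<omega>. indicator E \<omega> * val A r c (h \<omega>) \<partial>M)"
    using bin_jensen[OF assms(1,4,5,2,3,8,9)] by (simp add: P_def Sh_def)
  finally show ?thesis by (simp add: P_def)
qed

lemma bin_shift_const:
  fixes g :: "'a \<Rightarrow> real^'d"
  assumes "prob_space M" "E \<in> sets M" "measure M E > 0"
    "g \<in> borel_measurable M" "\<forall>\<omega>\<in>space M. g \<omega> \<in> unit_cube"
    "p \<in> worst_beliefs A r c ((1 / measure M E) *\<^sub>R (\<integral>\<omega>. indicator E \<omega> *\<^sub>R g \<omega> \<partial>M)) (\<epsilon> / measure M E)"
  shows "norm (\<integral>\<omega>. indicator E \<omega> *\<^sub>R (p - g \<omega>) \<partial>M) \<le> \<epsilon>"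
proof -
  interpret prob_space M by fact
  define P where "P = measure M E"
  define Sg where "Sg = (\<integral>\<omega>. indicator E \<omega> *\<^sub>R g \<omega> \<partial>M)"
  have P: "P > 0" using assms(3) P_def by simp
  have "(\<integral>\<omega>. indicator E \<omega> *\<^sub>R (p - g \<omega>) \<partial>M) = (\<integral>\<omega>. indicator E \<omega> *\<^sub>R p \<partial>M) - Sg"
    unfolding Sg_def
    by (rule shift_eq[OF assms(1,2) _ _ assms(4,5)]) (use assms(6) in \<open>auto simp: worst_beliefs_def\<close>)
  also have "(\<integral>\<omega>. indicator E \<omega> *\<^sub>R p \<partial>M) = P *\<^sub>R p"
    using assms(2) by (simp add: P_def Int_absorb2 sets.sets_into_space less_top[symmetric] emeasure_finite)
  also have "Sg = P *\<^sub>R ((1 / P) *\<^sub>R Sg)" using P by simp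
  also have "P *\<^sub>R p - P *\<^sub>R ((1 / P) *\<^sub>R Sg) = P *\<^sub>R (p - (1 / P) *\<^sub>R Sg)"
    by (simp add: scaleR_diff_right)
  finally have eq: "(\<integral>\<omega>. indicator E \<omega> *\<^sub>R (p - g \<omega>) \<partial>M) = P *\<^sub>R (p - (1 / P) *\<^sub>R Sg)" .
  have "norm (p - (1 / P) *\<^sub>R Sg) \<le> \<epsilon> / P"
    using assms(6) unfolding worst_beliefs_def P_def Sg_def by blast
  then have "P * norm (p - (1 / P) *\<^sub>R Sg) \<le> \<epsilon>" using P by (simp add: field_simps)
  then show ?thesis using eq P by simp
qed



theorem proposition3:
  fixes M :: "'a measure" and SX :: "'x measure"
    and X :: "'a \<Rightarrow> 'x" and Y :: "'a \<Rightarrow> real ^ 'd" and f :: "'x \<Rightarrow> real ^ 'd"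
    and A :: "'b set" and r :: "'b \<Rightarrow> real ^ 'd" and c :: "'b \<Rightarrow> real"
    and B :: "nat \<Rightarrow> (real ^ 'd) set" and J :: nat and \<epsilon> :: real
  assumes "prob_space M"
    and "X \<in> measurable M SX"
    and "Y \<in> borel_measurable M" and "\<forall>\<omega> \<in> space M. Y \<omega> \<in> unit_cube"
    and "f \<in> borel_measurable SX" and "\<forall>x \<in> space SX. f x \<in> unit_cube"
    and "finite A" and "A \<noteq> {}"
    and "\<forall>j \<in> {1..J}. B j \<in> sets borel"
    and "disjoint_family_on B {1..J}"
    and "(\<Union>j \<in> {1..J}. B j) = unit_cube"
    and "\<forall>j \<in> {1..J}. bin_prob M X f (B j) > 0"
    and "\<epsilon> \<ge> 0"
  shows
    "(\<exists>q \<in> Q_set M X f B J \<epsilon>. \<forall>q' \<in> Q_set M X f B J \<epsilon>.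
        exp_val M X f A r c q \<le> exp_val M X f A r c q')
     \<and> (\<Sum>j = 1..J. bin_prob M X f (B j) * val A r c (bin_mean M X f (B j)))
         - real J * lip_const A r * \<epsilon>
       \<le> (INF q \<in> Q_set M X f B J \<epsilon>. exp_val M X f A r c q)
     \<and> (INF q \<in> Q_set M X f B J \<epsilon>. exp_val M X f A r c q)
       \<le> (\<Sum>j = 1..J. bin_prob M X f (B j) * val A r c (bin_mean M X f (B j)))
     \<and> (\<forall>j \<in> {1..J}. worst_beliefs A r c (bin_mean M X f (B j)) (\<epsilon> / bin_prob M X f (B j)) \<noteq> {})
     \<and> (\<forall>p :: nat \<Rightarrow> real ^ 'd.
          (\<forall>j \<in> {1..J}. p j \<in> worst_beliefs A r c (bin_mean M X f (B j)) (\<epsilon> / bin_prob M X f (B j)))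
          \<longrightarrow> (\<exists>qs. qs \<in> borel_measurable borel \<and> (\<forall>j \<in> {1..J}. \<forall>v \<in> B j. qs v = p j))
            \<and> (\<forall>qs. qs \<in> borel_measurable borel \<and> (\<forall>j \<in> {1..J}. \<forall>v \<in> B j. qs v = p j) \<longrightarrow>
                 qs \<in> Q_set M X f B J \<epsilon>
                 \<and> exp_val M X f A r c qs = (INF q \<in> Q_set M X f B J \<epsilon>. exp_val M X f A r c q)
                 \<and> (\<forall>j \<in> {1..J}. \<forall>v \<in> B j. best_resp A r c (qs v) = best_resp A r c (p j))))"
proof -
  interpret prob_space M by fact
  let ?E = "\<lambda>j. {\<omega> \<in> space M. f (X \<omega>) \<in> B j}"
  let ?P = "\<lambda>j. bin_prob M X f (B j)"
  let ?m = "\<lambda>j. bin_mean M X f (B j)"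
  let ?Q = "Q_set M X f B J \<epsilon>"
  let ?ev = "exp_val M X f A r c"
  let ?wb = "\<lambda>j. worst_beliefs A r c (?m j) (\<epsilon> / ?P j)"
  have pm: "prob_space M" by fact
  have gm: "(\<lambda>\<omega>. f (X \<omega>)) \<in> borel_measurable M"
    by (rule measurable_compose[OF assms(2) assms(5)])
  have gc: "\<forall>\<omega>\<in>space M. f (X \<omega>) \<in> unit_cube"
    by (simp add: assms(6) measurable_space[OF assms(2)])
  have Es: "?E j \<in> sets M" if "j \<in> {1..J}" for j
    using that assms(9) Ej_sets[OF gm] by blast
  have Pdef: "?P j = measure M (?E j)" for j by (simp add: bin_prob_def)
  have Ppos: "measure M (?E j) > 0" if "j \<in> {1..J}" for j
    using assms(12) that by (simp add: bin_prob_def)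
  have mdef: "?m j = (1 / measure M (?E j)) *\<^sub>R (\<integral>\<omega>. indicator (?E j) \<omega> *\<^sub>R f (X \<omega>) \<partial>M)" for j
    by (simp add: bin_mean_def bin_prob_def)
  have mcube: "?m j \<in> unit_cube" if "j \<in> {1..J}" for j
    unfolding mdef by (rule cube_mean[OF pm gm gc Es[OF that] Ppos[OF that]])
  have wbne: "?wb j \<noteq> {}" if "j \<in> {1..J}" for j
  proof -
    have "?P j > 0" using assms(12) that by blast
    then show ?thesis by (intro wb_nonempty[OF assms(7,8) mcube[OF that]]) (use assms(13) in simp)
  qed
  have decomp: "?ev q = (\<Sum>j=1..J. \<integral>\<omega>. indicator (?E j) \<omega> * val A r c (q (f (X \<omega>))) \<partial>M)"
    if qm: "q \<in> borel_measurable borel" and qc: "\<forall>v\<in>unit_cube. q v \<in> unit_cube" for q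
  proof -
    have hm: "(\<lambda>\<omega>. q (f (X \<omega>))) \<in> borel_measurable M" by (rule measurable_compose[OF gm qm])
    have hc: "\<forall>\<omega>\<in>space M. q (f (X \<omega>)) \<in> unit_cube" using gc qc by blast
    show ?thesis unfolding exp_val_def
      by (rule partition_sum[OF pm gm gc assms(9,10,11) integrable_val[OF pm hm hc assms(7,8)]])
  qed
  have key: "qs \<in> ?Q \<and> ?ev qs = (\<Sum>j=1..J. ?P j * val A r c (p j)) \<and> (\<forall>q\<in>?Q. ?ev qs \<le> ?ev q)"
    if pw: "\<forall>j\<in>{1..J}. p j \<in> ?wb j" and qsm: "qs \<in> borel_measurable borel"
      and qsB: "\<forall>j\<in>{1..J}. \<forall>v\<in>B j. qs v = p j" for p qs
  proof -
    have qsc: "\<forall>v\<in>unit_cube. qs v \<in> unit_cube"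
    proof
      fix v assume "v \<in> (unit_cube :: (real^'d) set)"
      then obtain j where j: "j \<in> {1..J}" "v \<in> B j" using assms(11) by blast
      then have "qs v = p j" using qsB by blast
      then show "qs v \<in> unit_cube" using pw j(1) unfolding worst_beliefs_def by auto
    qed
    have qg: "\<omega> \<in> ?E j \<Longrightarrow> qs (f (X \<omega>)) = p j" if "j \<in> {1..J}" for j \<omega>
      using qsB that by auto
    have inQ: "qs \<in> ?Q"
      unfolding Q_set_def
    proof (intro CollectI conjI qsm qsc ballI)
      fix j assume j: "j \<in> {1..J}"
      have "(\<integral>\<omega>. indicator (?E j) \<omega> *\<^sub>R (qs (f (X \<omega>)) - f (X \<omega>)) \<partial>M)
          = (\<integral>\<omega>. indicator (?E j) \<omega> *\<^sub>R (p j - f (X \<omega>)) \<partial>M)"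
        by (rule Bochner_Integration.integral_cong[OF refl]) (auto simp: indicator_def qg[OF j])
      also have "norm \<dots> \<le> \<epsilon>"
        by (rule bin_shift_const[where A=A and r=r and c=c, OF pm Es[OF j] Ppos[OF j] gm gc]) (use pw j in \<open>simp add: mdef Pdef\<close>)
      finally show "norm (\<integral>\<omega>. indicator (?E j) \<omega> *\<^sub>R (qs (f (X \<omega>)) - f (X \<omega>)) \<partial>M) \<le> \<epsilon>" .
    qed
    have evqs: "?ev qs = (\<Sum>j=1..J. ?P j * val A r c (p j))"
    proof -
      have "?ev qs = (\<Sum>j=1..J. \<integral>\<omega>. indicator (?E j) \<omega> * val A r c (qs (f (X \<omega>))) \<partial>M)"
        by (rule decomp[OF qsm qsc])
      also have "\<dots> = (\<Sum>j=1..J. ?P j * val A r c (p j))"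
      proof (rule sum.cong[OF refl])
        fix j assume j: "j \<in> {1..J}"
        have "(\<integral>\<omega>. indicator (?E j) \<omega> * val A r c (qs (f (X \<omega>))) \<partial>M)
            = (\<integral>\<omega>. indicator (?E j) \<omega> * val A r c (p j) \<partial>M)"
          by (rule Bochner_Integration.integral_cong[OF refl]) (auto simp: indicator_def qg[OF j])
        also have "\<dots> = measure M (?E j) * val A r c (p j)"
          using Es[OF j] by (simp add: Int_absorb2 sets.sets_into_space less_top[symmetric] emeasure_finite)
        finally show "(\<integral>\<omega>. indicator (?E j) \<omega> * val A r c (qs (f (X \<omega>))) \<partial>M) = ?P j * val A r c (p j)"
          by (simp add: Pdef)
      qed
      finally show ?thesis .
    qed
    have low: "?ev qs \<le> ?ev q" if qQ: "q \<in> ?Q" for q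
    proof -
      have qm: "q \<in> borel_measurable borel" and qc: "\<forall>v\<in>unit_cube. q v \<in> unit_cube"
        and qsh: "\<forall>j\<in>{1..J}. norm (\<integral>\<omega>. indicator (?E j) \<omega> *\<^sub>R (q (f (X \<omega>)) - f (X \<omega>)) \<partial>M) \<le> \<epsilon>"
        using qQ unfolding Q_set_def by auto
      have hm: "(\<lambda>\<omega>. q (f (X \<omega>))) \<in> borel_measurable M" by (rule measurable_compose[OF gm qm])
      have hc: "\<forall>\<omega>\<in>space M. q (f (X \<omega>)) \<in> unit_cube" using gc qc by blast
      have "?ev qs = (\<Sum>j=1..J. ?P j * val A r c (p j))" by (rule evqs)
      also have "\<dots> \<le> (\<Sum>j=1..J. \<integral>\<omega>. indicator (?E j) \<omega> * val A r c (q (f (X \<omega>))) \<partial>M)"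
      proof (rule sum_mono)
        fix j assume j: "j \<in> {1..J}"
        have "measure M (?E j) * val A r c (p j) \<le> (\<integral>\<omega>. indicator (?E j) \<omega> * val A r c (q (f (X \<omega>))) \<partial>M)"
          by (rule bin_lower[where \<epsilon>=\<epsilon>, OF pm Es[OF j] Ppos[OF j] hm hc gm gc assms(7,8)])
             (use qsh pw j in \<open>simp_all add: mdef Pdef\<close>)
        then show "?P j * val A r c (p j) \<le> (\<integral>\<omega>. indicator (?E j) \<omega> * val A r c (q (f (X \<omega>))) \<partial>M)"
          by (simp add: Pdef)
      qed
      also have "\<dots> = ?ev q" by (rule decomp[OF qm qc, symmetric])
      finally show ?thesis .
    qed
    show ?thesis using inQ evqs low by blast
  qed
  have ex: "\<exists>qs. qs \<in> borel_measurable borel \<and> (\<forall>j\<in>{1..J}. \<forall>v\<in>B j. qs v = p j)" for p :: "nat \<Rightarrow> real^'d"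
  proof (intro exI conjI ballI)
    show "(\<lambda>v. \<Sum>i\<in>{1..J}. indicator (B i) v *\<^sub>R p i) \<in> borel_measurable borel"
    proof (rule borel_measurable_sum)
      fix i assume "i \<in> {1..J}"
      then have "B i \<in> sets borel" using assms(9) by blast
      then show "(\<lambda>v. indicator (B i) v *\<^sub>R p i) \<in> borel_measurable borel"
        by (intro borel_measurable_scaleR borel_measurable_indicator borel_measurable_const)
    qed
    fix j v assume "j \<in> {1..J}" "v \<in> B j"
    then show "(\<Sum>i\<in>{1..J}. indicator (B i) v *\<^sub>R p i) = p j"
      by (intro sum_ind_eq[OF assms(10)]) auto
  qed
  define p0 where "p0 = (\<lambda>j. SOME x. x \<in> ?wb j)"
  have p0: "\<forall>j\<in>{1..J}. p0 j \<in> ?wb j"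
    unfolding p0_def by (rule ballI) (use wbne in \<open>simp add: some_in_eq\<close>)
  obtain qs0 where qs0: "qs0 \<in> borel_measurable borel" "\<forall>j\<in>{1..J}. \<forall>v\<in>B j. qs0 v = p0 j"
    using ex by blast
  have k0: "qs0 \<in> ?Q" "?ev qs0 = (\<Sum>j=1..J. ?P j * val A r c (p0 j))" "\<forall>q\<in>?Q. ?ev qs0 \<le> ?ev q"
    using key[OF p0 qs0] by auto
  have INFeq: "(INF q \<in> ?Q. ?ev q) = ?ev qs0"
    by (rule cInf_eq_minimum) (use k0(1,3) in auto)
  have Lnn: "0 \<le> lip_const A r" by (rule lip_nonneg[OF assms(7,8)])
  have up: "(INF q \<in> ?Q. ?ev q) \<le> (\<Sum>j=1..J. ?P j * val A r c (?m j))"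
  proof -
    have "(\<Sum>j=1..J. ?P j * val A r c (p0 j)) \<le> (\<Sum>j=1..J. ?P j * val A r c (?m j))"
    proof (rule sum_mono)
      fix j assume j: "j \<in> {1..J}"
      have Pj: "?P j > 0" using assms(12) j by blast
      have "p0 j \<in> ?wb j" using p0 j by blast
      then have "\<forall>p'\<in>unit_cube. norm (p' - ?m j) \<le> \<epsilon> / ?P j \<longrightarrow> val A r c (p0 j) \<le> val A r c p'"
        unfolding worst_beliefs_def by blast
      moreover have "norm (?m j - ?m j) \<le> \<epsilon> / ?P j" using Pj assms(13) by simp
      ultimately have "val A r c (p0 j) \<le> val A r c (?m j)"
        using mcube[OF j] by blast
      then show "?P j * val A r c (p0 j) \<le> ?P j * val A r c (?m j)"
        using Pj by (intro mult_left_mono) auto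
    qed
    then show ?thesis using INFeq k0(2) by simp
  qed
  have lo: "(\<Sum>j=1..J. ?P j * val A r c (?m j)) - real J * lip_const A r * \<epsilon> \<le> (INF q \<in> ?Q. ?ev q)"
  proof -
    have "(\<Sum>j=1..J. ?P j * val A r c (?m j) - lip_const A r * \<epsilon>) \<le> (\<Sum>j=1..J. ?P j * val A r c (p0 j))"
    proof (rule sum_mono)
      fix j assume j: "j \<in> {1..J}"
      have Pj: "?P j > 0" using assms(12) j by auto
      have nm: "norm (p0 j - ?m j) \<le> \<epsilon> / ?P j" using p0 j unfolding worst_beliefs_def by auto
      have "val A r c (?m j) - lip_const A r * norm (p0 j - ?m j) \<le> val A r c (p0 j)"
        by (rule val_lip[OF assms(7,8)])
      then have "?P j * val A r c (?m j) - ?P j * (lip_const A r * norm (p0 j - ?m j)) \<le> ?P j * val A r c (p0 j)"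
        using Pj by (metis mult_left_mono less_imp_le right_diff_distrib)
      moreover have "?P j * (lip_const A r * norm (p0 j - ?m j)) \<le> lip_const A r * \<epsilon>"
      proof -
        have "lip_const A r * norm (p0 j - ?m j) \<le> lip_const A r * (\<epsilon> / ?P j)"
          using nm Lnn by (rule mult_left_mono)
        then have "?P j * (lip_const A r * norm (p0 j - ?m j)) \<le> ?P j * (lip_const A r * (\<epsilon> / ?P j))"
          by (rule mult_left_mono) (use Pj in simp)
        also have "\<dots> = lip_const A r * \<epsilon>" using Pj by simp
        finally show ?thesis .
      qed
      ultimately show "?P j * val A r c (?m j) - lip_const A r * \<epsilon> \<le> ?P j * val A r c (p0 j)"
        by linarith
    qed
    moreover have "(\<Sum>j=1..J. ?P j * val A r c (?m j) - lip_const A r * \<epsilon>)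
        = (\<Sum>j=1..J. ?P j * val A r c (?m j)) - real J * lip_const A r * \<epsilon>"
      by (simp add: sum_subtractf)
    ultimately show ?thesis using INFeq k0(2) by simp
  qed
  have part5: "\<forall>p :: nat \<Rightarrow> real ^ 'd.
          (\<forall>j \<in> {1..J}. p j \<in> ?wb j)
          \<longrightarrow> (\<exists>qs. qs \<in> borel_measurable borel \<and> (\<forall>j \<in> {1..J}. \<forall>v \<in> B j. qs v = p j))
            \<and> (\<forall>qs. qs \<in> borel_measurable borel \<and> (\<forall>j \<in> {1..J}. \<forall>v \<in> B j. qs v = p j) \<longrightarrow>
                 qs \<in> ?Q
                 \<and> ?ev qs = (INF q \<in> ?Q. ?ev q)
                 \<and> (\<forall>j \<in> {1..J}. \<forall>v \<in> B j. best_resp A r c (qs v) = best_resp A r c (p j)))"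
  proof (intro allI impI conjI)
    fix p :: "nat \<Rightarrow> real^'d" assume pw: "\<forall>j \<in> {1..J}. p j \<in> ?wb j"
    show "\<exists>qs. qs \<in> borel_measurable borel \<and> (\<forall>j \<in> {1..J}. \<forall>v \<in> B j. qs v = p j)" by (rule ex)
    fix qs assume qs: "qs \<in> borel_measurable borel \<and> (\<forall>j \<in> {1..J}. \<forall>v \<in> B j. qs v = p j)"
    note kk = key[OF pw conjunct1[OF qs] conjunct2[OF qs]]
    have k1: "qs \<in> ?Q" using kk by (rule conjunct1)
    have k2: "\<forall>q\<in>?Q. ?ev qs \<le> ?ev q" using kk by (elim conjE)
    note k = k1 k2
    show "qs \<in> ?Q" by (rule k(1))
    show "?ev qs = (INF q \<in> ?Q. ?ev q)"
      by (rule cInf_eq_minimum[symmetric]) (use k in auto)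
    show "\<forall>j \<in> {1..J}. \<forall>v \<in> B j. best_resp A r c (qs v) = best_resp A r c (p j)"
      using qs by auto
  qed
  show ?thesis
    using k0 lo up wbne part5 by blast
qed

end
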